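(* Let $\Bbbk$ be an algebraically closed field of characteristic zero, $G$ a finite group, $\chi:G\to\Bbbk^\times$ a linear character, $g\in Z(G)$, $n\geq 2$ the multiplicative order of $\chi(g)$, and $\alpha\in\Bbbk$ with $\alpha(g^n-1)=0$ or $\chi^n=1$. Let $H$ be the $\Bbbk$-algebra generated by $\Bbbk G$ and $z$ with relations $z^n=\alpha(g^n-1)$ and $zs=\chi(s)sz$ for $s\in G$. Then for all $h_1,h_2\in\Bbbk G$ and $0\leq m\leq n-1$, there exists $h\in Z(\Bbbk G)$ with $h^2=h$ such that $(z^mh_1,z^mh_2)=(z^mh)$.
   Context: $(a_1,\dots,a_t)$ denotes the two-sided ideal of $H$ generated by $a_1,\dots,a_t$. *)

theory Defs
  imports "HOL-Algebra.Group" "HOL-Computational_Algebra.Polynomial"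
begin

definition alg_closed :: "'k::field itself \<Rightarrow> bool" where
  "alg_closed _ \<longleftrightarrow> (\<forall>p::'k poly. 0 < degree p \<longrightarrow> (\<exists>x. poly p x = 0))"

text \<open>Group algebra kG of a finite group G: functions G \<Rightarrow> k supported on carrier G
  (a = sum over s of a(s) s).\<close>
definition kG :: "('g,'b) monoid_scheme \<Rightarrow> ('g \<Rightarrow> 'k::field) set" where
  "kG G = {a. \<forall>u. u \<notin> carrier G \<longrightarrow> a u = 0}"

definition ga_mult :: "('g,'b) monoid_scheme \<Rightarrow> ('g \<Rightarrow> 'k::field) \<Rightarrow> ('g \<Rightarrow> 'k) \<Rightarrow> ('g \<Rightarrow> 'k)" where
  "ga_mult G a b = (\<lambda>u. if u \<in> carrier G
      then (\<Sum>s\<in>carrier G. a s * b (inv\<^bsub>G\<^esub> s \<otimes>\<^bsub>G\<^esub> u)) else 0)"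

definition ga_delta :: "('g,'b) monoid_scheme \<Rightarrow> 'g \<Rightarrow> ('g \<Rightarrow> 'k::field)" where
  "ga_delta G s = (\<lambda>u. if u = s then 1 else 0)"

definition kG_center :: "('g,'b) monoid_scheme \<Rightarrow> ('g \<Rightarrow> 'k::field) set" where
  "kG_center G = {h \<in> kG G. \<forall>a \<in> kG G. ga_mult G h a = ga_mult G a h}"

definition Hrel :: "('g,'b) monoid_scheme \<Rightarrow> 'k::field \<Rightarrow> 'g \<Rightarrow> nat \<Rightarrow> ('g \<Rightarrow> 'k)" where
  "Hrel G \<alpha> g n = (\<lambda>u. \<alpha> * (ga_delta G (g [^]\<^bsub>G\<^esub> n) u - ga_delta G \<one>\<^bsub>G\<^esub> u))"

text \<open>Twist: for a \<in> kG, a z^j = z^j (twist j a), since s z = \<chi>(s)^{-1} z s.\<close>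
definition twist :: "('g \<Rightarrow> 'k::field) \<Rightarrow> nat \<Rightarrow> ('g \<Rightarrow> 'k) \<Rightarrow> ('g \<Rightarrow> 'k)" where
  "twist \<chi> j a = (\<lambda>s. inverse (\<chi> s) ^ j * a s)"

text \<open>The algebra H, modelled on its standard basis: an element x stands for
  \<Sum>_{i<n} z^i (x i) with x i \<in> kG.\<close>
definition Hcarr :: "('g,'b) monoid_scheme \<Rightarrow> nat \<Rightarrow> (nat \<Rightarrow> 'g \<Rightarrow> 'k::field) set" where
  "Hcarr G n = {x. \<forall>i u. (n \<le> i \<or> u \<notin> carrier G) \<longrightarrow> x i u = 0}"

definition H_add :: "(nat \<Rightarrow> 'g \<Rightarrow> 'k::field) \<Rightarrow> (nat \<Rightarrow> 'g \<Rightarrow> 'k) \<Rightarrow> (nat \<Rightarrow> 'g \<Rightarrow> 'k)" where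
  "H_add x y = (\<lambda>i u. x i u + y i u)"

text \<open>(z^i a)(z^j b) = z^(i+j) (twist j a) b, and z^n = \<alpha>(g^n - 1).\<close>
definition H_mult :: "('g,'b) monoid_scheme \<Rightarrow> ('g \<Rightarrow> 'k::field) \<Rightarrow> 'k \<Rightarrow> 'g \<Rightarrow> nat
    \<Rightarrow> (nat \<Rightarrow> 'g \<Rightarrow> 'k) \<Rightarrow> (nat \<Rightarrow> 'g \<Rightarrow> 'k) \<Rightarrow> (nat \<Rightarrow> 'g \<Rightarrow> 'k)" where
  "H_mult G \<chi> \<alpha> g n x y = (\<lambda>k u. if k < n \<and> u \<in> carrier G then
      (\<Sum>i<n. \<Sum>j<n.
          (if i + j = k then ga_mult G (twist \<chi> j (x i)) (y j) u else 0)
        + (if i + j = k + n then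
             ga_mult G (Hrel G \<alpha> g n) (ga_mult G (twist \<chi> j (x i)) (y j)) u else 0))
      else 0)"

definition is_Hideal :: "('g,'b) monoid_scheme \<Rightarrow> ('g \<Rightarrow> 'k::field) \<Rightarrow> 'k \<Rightarrow> 'g \<Rightarrow> nat
    \<Rightarrow> (nat \<Rightarrow> 'g \<Rightarrow> 'k) set \<Rightarrow> bool" where
  "is_Hideal G \<chi> \<alpha> g n I \<longleftrightarrow> I \<subseteq> Hcarr G n \<and> (\<lambda>i u. 0) \<in> I
     \<and> (\<forall>x\<in>I. \<forall>y\<in>I. H_add x y \<in> I)
     \<and> (\<forall>x\<in>I. \<forall>a\<in>Hcarr G n. H_mult G \<chi> \<alpha> g n a x \<in> I \<and> H_mult G \<chi> \<alpha> g n x a \<in> I)"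

definition Hideal_gen :: "('g,'b) monoid_scheme \<Rightarrow> ('g \<Rightarrow> 'k::field) \<Rightarrow> 'k \<Rightarrow> 'g \<Rightarrow> nat
    \<Rightarrow> (nat \<Rightarrow> 'g \<Rightarrow> 'k) set \<Rightarrow> (nat \<Rightarrow> 'g \<Rightarrow> 'k) set" where
  "Hideal_gen G \<chi> \<alpha> g n S = \<Inter>{I. S \<subseteq> I \<and> is_Hideal G \<chi> \<alpha> g n I}"

definition zpow_times :: "nat \<Rightarrow> ('g \<Rightarrow> 'k::field) \<Rightarrow> (nat \<Rightarrow> 'g \<Rightarrow> 'k)" where
  "zpow_times m h = (\<lambda>i. if i = m then h else (\<lambda>u. 0))"

end

theory Submission imports Defs "HOL-Library.Function_Algebras" begin


definition scl :: "'k::field \<Rightarrow> ('g \<Rightarrow> 'k) \<Rightarrow> ('g \<Rightarrow> 'k)" where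
  "scl c f = (\<lambda>u. c * f u)"

lemma vs_scl: "vector_space (scl :: 'k::field \<Rightarrow> ('g \<Rightarrow> 'k) \<Rightarrow> ('g \<Rightarrow> 'k))"
  by unfold_locales (auto simp: scl_def fun_eq_iff algebra_simps)

lemma proj_exists:
  fixes I :: "('g \<Rightarrow> 'k::field) set"
  assumes I0: "(\<lambda>u. 0) \<in> I" and Iadd: "\<And>x y. x \<in> I \<Longrightarrow> y \<in> I \<Longrightarrow> (\<lambda>u. x u + y u) \<in> I"
    and Iscl: "\<And>c x. x \<in> I \<Longrightarrow> (\<lambda>u. c * x u) \<in> I"
  shows "\<exists>P. (\<forall>x y. P (\<lambda>u. x u + y u) = (\<lambda>u. P x u + P y u))
     \<and> (\<forall>c x. P (\<lambda>u. c * x u) = (\<lambda>u. c * P x u))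
     \<and> (\<forall>x. P x \<in> I) \<and> (\<forall>x\<in>I. P x = x)"
proof -
  interpret vs: vector_space_pair "scl :: 'k \<Rightarrow> ('g \<Rightarrow> 'k) \<Rightarrow> ('g \<Rightarrow> 'k)" "scl :: 'k \<Rightarrow> ('g \<Rightarrow> 'k) \<Rightarrow> ('g \<Rightarrow> 'k)"
    by (simp add: vector_space_pair_def vs_scl)
  have sub: "vs.vs1.subspace I"
    unfolding vs.vs1.subspace_def using I0 Iadd Iscl
    by (auto simp: scl_def zero_fun_def plus_fun_def)
  obtain B where B: "B \<subseteq> I" "vs.vs1.independent B" "I \<subseteq> vs.vs1.span B"
    by (rule vs.vs1.basis_exists)
  have spanB: "vs.vs1.span B = I"
    using vs.vs1.span_subspace[OF B(1) B(3) sub] .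
  define P where "P = vs.construct B id"
  interpret L: Vector_Spaces.linear scl scl P
    unfolding P_def by (rule vs.linear_construct[OF B(2)])
  have "\<forall>x y. P (\<lambda>u. x u + y u) = (\<lambda>u. P x u + P y u)"
    using L.add unfolding plus_fun_def by blast
  moreover have "\<forall>c x. P (\<lambda>u. c * x u) = (\<lambda>u. c * P x u)"
    using L.scale unfolding scl_def by blast
  moreover have "\<forall>x. P x \<in> I"
    using vs.construct_in_span[OF B(2), of id] spanB unfolding P_def id_def image_ident by blast
  moreover have "\<forall>x\<in>I. P x = x"
  proof
    fix x assume "x \<in> I"
    then have "x \<in> vs.vs1.span B" using spanB by simp
    then have "P x = id x"
    proof (rule vs.linear_eq_on[of P id x B, rotated 2])
      show "Vector_Spaces.linear scl scl P" by (rule L.linear_axioms)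
      show "Vector_Spaces.linear scl scl (id :: ('g \<Rightarrow> 'k) \<Rightarrow> _)" by (rule vs.vs1.linear_id)
      show "\<And>b. b \<in> B \<Longrightarrow> P b = id b" unfolding P_def using vs.construct_basis[OF B(2)] by simp
    qed
    then show "P x = x" by simp
  qed
  ultimately show ?thesis by blast
qed

context
  fixes G :: "('g,'b) monoid_scheme" (structure)
  assumes grp: "group G" and fin: "finite (carrier G)"
begin

interpretation group G by (rule grp)

lemma reindex_l: "s \<in> carrier G \<Longrightarrow> (\<Sum>t\<in>carrier G. f (s \<otimes> t)) = (\<Sum>t\<in>carrier G. f t)"
  by (rule sum.reindex_bij_witness[where i="\<lambda>t. inv s \<otimes> t" and j="\<lambda>t. s \<otimes> t"])
     (auto simp: m_assoc[symmetric])

lemma ga_assoc: "ga_mult G (ga_mult G a b) c = ga_mult G a (ga_mult G b c)"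
proof (rule ext)
  fix u
  show "ga_mult G (ga_mult G a b) c u = ga_mult G a (ga_mult G b c) u"
  proof (cases "u \<in> carrier G")
    case False then show ?thesis by (simp add: ga_mult_def)
  next
    case u: True
    have "ga_mult G (ga_mult G a b) c u
        = (\<Sum>t\<in>carrier G. (\<Sum>s\<in>carrier G. a s * b (inv s \<otimes> t)) * c (inv t \<otimes> u))"
      using u by (simp add: ga_mult_def)
    also have "\<dots> = (\<Sum>t\<in>carrier G. \<Sum>s\<in>carrier G. a s * b (inv s \<otimes> t) * c (inv t \<otimes> u))"
      by (simp add: sum_distrib_right)
    also have "\<dots> = (\<Sum>s\<in>carrier G. \<Sum>t\<in>carrier G. a s * b (inv s \<otimes> t) * c (inv t \<otimes> u))"
      by (rule sum.swap)
    also have "\<dots> = (\<Sum>s\<in>carrier G. a s * (\<Sum>r\<in>carrier G. b r * c (inv r \<otimes> (inv s \<otimes> u))))"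
    proof (rule sum.cong[OF refl])
      fix s assume s: "s \<in> carrier G"
      have "(\<Sum>r\<in>carrier G. b r * c (inv r \<otimes> (inv s \<otimes> u)))
          = (\<Sum>t\<in>carrier G. b (inv s \<otimes> t) * c (inv (inv s \<otimes> t) \<otimes> (inv s \<otimes> u)))"
        using reindex_l[of "inv s" "\<lambda>r. b r * c (inv r \<otimes> (inv s \<otimes> u))"] s by simp
      also have "\<dots> = (\<Sum>t\<in>carrier G. b (inv s \<otimes> t) * c (inv t \<otimes> u))"
      proof (rule sum.cong[OF refl])
        fix t assume t: "t \<in> carrier G"
        have "inv (inv s \<otimes> t) \<otimes> (inv s \<otimes> u) = inv t \<otimes> (s \<otimes> (inv s \<otimes> u))"
          using s t u by (simp add: inv_mult_group m_assoc)
        also have "s \<otimes> (inv s \<otimes> u) = u" using s u by (simp add: m_assoc[symmetric])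
        finally show "b (inv s \<otimes> t) * c (inv (inv s \<otimes> t) \<otimes> (inv s \<otimes> u)) = b (inv s \<otimes> t) * c (inv t \<otimes> u)"
          by simp
      qed
      finally show "(\<Sum>t\<in>carrier G. a s * b (inv s \<otimes> t) * c (inv t \<otimes> u)) =
          a s * (\<Sum>r\<in>carrier G. b r * c (inv r \<otimes> (inv s \<otimes> u)))"
        by (simp add: sum_distrib_left mult.assoc)
    qed
    also have "\<dots> = ga_mult G a (ga_mult G b c) u"
      using u by (simp add: ga_mult_def)
    finally show ?thesis .
  qed
qed

lemma mult_kG: "ga_mult G a b \<in> kG G"
  by (simp add: kG_def ga_mult_def)

lemma delta_kG: "s \<in> carrier G \<Longrightarrow> ga_delta G s \<in> kG G"
  by (auto simp: kG_def ga_delta_def)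

lemma delta_left: "s \<in> carrier G \<Longrightarrow>
    ga_mult G (ga_delta G s) x = (\<lambda>u. if u \<in> carrier G then x (inv s \<otimes> u) else 0)"
proof (rule ext)
  fix u assume s: "s \<in> carrier G"
  have "(\<Sum>t\<in>carrier G. ga_delta G s t * x (inv t \<otimes> u))
      = (\<Sum>t\<in>carrier G. if t = s then x (inv t \<otimes> u) else 0)"
    by (rule sum.cong) (auto simp: ga_delta_def)
  also have "\<dots> = x (inv s \<otimes> u)" using s fin by simp
  finally show "ga_mult G (ga_delta G s) x u = (if u \<in> carrier G then x (inv s \<otimes> u) else 0)"
    by (simp add: ga_mult_def)
qed

lemma delta_right: "s \<in> carrier G \<Longrightarrow>
    ga_mult G x (ga_delta G s) = (\<lambda>u. if u \<in> carrier G then x (u \<otimes> inv s) else 0)"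
proof (rule ext)
  fix u assume s: "s \<in> carrier G"
  show "ga_mult G x (ga_delta G s) u = (if u \<in> carrier G then x (u \<otimes> inv s) else 0)"
  proof (cases "u \<in> carrier G")
    case True
    have "(\<Sum>t\<in>carrier G. x t * ga_delta G s (inv t \<otimes> u))
        = (\<Sum>t\<in>carrier G. if t = u \<otimes> inv s then x t else 0)"
    proof (rule sum.cong[OF refl])
      fix t assume t: "t \<in> carrier G"
      have "(inv t \<otimes> u = s) = (t = u \<otimes> inv s)"
        using inv_solve_left'[of s t u] inv_solve_right[of t u s] t s True by simp
      then show "x t * ga_delta G s (inv t \<otimes> u) = (if t = u \<otimes> inv s then x t else 0)"
        by (simp add: ga_delta_def)
    qed
    also have "\<dots> = x (u \<otimes> inv s)" using True s fin by simp
    finally show ?thesis using True by (simp add: ga_mult_def)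
  qed (simp add: ga_mult_def)
qed

lemma one_left: "x \<in> kG G \<Longrightarrow> ga_mult G (ga_delta G \<one>) x = x"
  by (auto simp: delta_left fun_eq_iff kG_def)

lemma one_right: "x \<in> kG G \<Longrightarrow> ga_mult G x (ga_delta G \<one>) = x"
  by (auto simp: delta_right fun_eq_iff kG_def)

lemma delta_delta: "s \<in> carrier G \<Longrightarrow> t \<in> carrier G \<Longrightarrow>
    ga_mult G (ga_delta G s) (ga_delta G t) = ga_delta G (s \<otimes> t)"
proof -
  assume s: "s \<in> carrier G" and t: "t \<in> carrier G"
  have "\<And>u. u \<in> carrier G \<Longrightarrow> (inv s \<otimes> u = t) = (u = s \<otimes> t)"
    using inv_solve_left' s t by blast
  then show ?thesis unfolding delta_left[OF s] using s t by (auto simp: fun_eq_iff ga_delta_def)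
qed

lemma mult_add_right: "ga_mult G a (\<lambda>u. x u + y u) = (\<lambda>u. ga_mult G a x u + ga_mult G a y u)"
  by (auto simp: ga_mult_def fun_eq_iff distrib_left sum.distrib)

lemma mult_add_left: "ga_mult G (\<lambda>u. x u + y u) a = (\<lambda>u. ga_mult G x a u + ga_mult G y a u)"
  by (auto simp: ga_mult_def fun_eq_iff distrib_right sum.distrib)

lemma mult_scale_right: "ga_mult G a (\<lambda>u. c * x u) = (\<lambda>u. c * ga_mult G a x u)"
  by (auto simp: ga_mult_def fun_eq_iff sum_distrib_left mult.left_commute)

lemma mult_scale_left: "ga_mult G (\<lambda>u. c * x u) a = (\<lambda>u. c * ga_mult G x a u)"
  by (auto simp: ga_mult_def fun_eq_iff sum_distrib_left mult.assoc)

lemma mult_zero_left: "ga_mult G (\<lambda>u. 0) a = (\<lambda>u. 0)"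
  by (auto simp: ga_mult_def fun_eq_iff)

lemma mult_zero_right: "ga_mult G a (\<lambda>u. 0) = (\<lambda>u. 0)"
  by (auto simp: ga_mult_def fun_eq_iff)

lemma mult_sum_right: "ga_mult G a (\<lambda>u. \<Sum>i\<in>A. f i u) = (\<lambda>u. \<Sum>i\<in>A. ga_mult G a (f i) u)"
proof (rule ext)
  fix u
  show "ga_mult G a (\<lambda>u. \<Sum>i\<in>A. f i u) u = (\<Sum>i\<in>A. ga_mult G a (f i) u)"
  proof (cases "u \<in> carrier G")
    case True
    have "(\<Sum>s\<in>carrier G. a s * (\<Sum>i\<in>A. f i (inv s \<otimes> u)))
        = (\<Sum>s\<in>carrier G. \<Sum>i\<in>A. a s * f i (inv s \<otimes> u))"
      by (simp add: sum_distrib_left)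
    also have "\<dots> = (\<Sum>i\<in>A. \<Sum>s\<in>carrier G. a s * f i (inv s \<otimes> u))"
      by (rule sum.swap)
    finally show ?thesis using True by (simp add: ga_mult_def)
  qed (simp add: ga_mult_def)
qed

lemma mult_as_sum: "ga_mult G y x = (\<lambda>u. \<Sum>r\<in>carrier G. y r * ga_mult G (ga_delta G r) x u)"
proof (rule ext)
  fix u
  have "(\<Sum>r\<in>carrier G. y r * ga_mult G (ga_delta G r) x u)
     = (\<Sum>r\<in>carrier G. y r * (if u \<in> carrier G then x (inv r \<otimes> u) else 0))"
    by (rule sum.cong[OF refl]) (simp add: delta_left)
  then show "ga_mult G y x u = (\<Sum>r\<in>carrier G. y r * ga_mult G (ga_delta G r) x u)"
    by (simp add: ga_mult_def)
qed

lemma closed_sum: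
  assumes I0: "(\<lambda>u. 0) \<in> I" and Iadd: "\<And>x y. x \<in> I \<Longrightarrow> y \<in> I \<Longrightarrow> (\<lambda>u. x u + y u) \<in> I"
  shows "finite A \<Longrightarrow> (\<And>i. i \<in> A \<Longrightarrow> f i \<in> I) \<Longrightarrow> (\<lambda>u. \<Sum>i\<in>A. f i u) \<in> I"
proof (induction A rule: finite_induct)
  case empty then show ?case using I0 by simp
next
  case (insert a A)
  then show ?case using Iadd[of "f a" "\<lambda>u. \<Sum>i\<in>A. f i u"] by simp
qed

lemma left_unit_exists:
  fixes I :: "('g \<Rightarrow> 'k::field_char_0) set"
  assumes IkG: "I \<subseteq> kG G" and I0: "(\<lambda>u. 0) \<in> I"
    and Iadd: "\<And>x y. x \<in> I \<Longrightarrow> y \<in> I \<Longrightarrow> (\<lambda>u. x u + y u) \<in> I"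
    and Iscl: "\<And>c x. x \<in> I \<Longrightarrow> (\<lambda>u. c * x u) \<in> I"
    and Ileft: "\<And>a x. a \<in> kG G \<Longrightarrow> x \<in> I \<Longrightarrow> ga_mult G a x \<in> I"
  shows "\<exists>e\<in>I. \<forall>x\<in>I. ga_mult G x e = x"
proof -
  obtain P where Padd: "\<And>x y. P (\<lambda>u. x u + y u) = (\<lambda>u. P x u + P y u)"
    and Pscl: "\<And>c x. P (\<lambda>u. c * x u) = (\<lambda>u. c * P x u)"
    and PI: "\<And>x. P x \<in> I" and Pfix: "\<And>x. x \<in> I \<Longrightarrow> P x = x"
    using proj_exists[OF I0 Iadd Iscl] by blast
  define N where "N = card (carrier G)"
  have "N \<noteq> 0" unfolding N_def using fin one_closed by (auto simp: card_eq_0_iff)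
  then have N0: "(of_nat N :: 'k) \<noteq> 0" by simp
  define c :: 'k where "c = inverse (of_nat N)"
  define Q where "Q x = (\<lambda>u. c * (\<Sum>s\<in>carrier G. ga_mult G (ga_delta G s) (P (ga_mult G (ga_delta G (inv s)) x)) u))" for x
  have QI: "Q x \<in> I" for x
    unfolding Q_def
    by (intro Iscl closed_sum[OF I0 Iadd] fin Ileft delta_kG PI) auto
  have Qfix: "Q x = x" if x: "x \<in> I" for x
  proof -
    have xk: "x \<in> kG G" using x IkG by auto
    have "ga_mult G (ga_delta G s) (P (ga_mult G (ga_delta G (inv s)) x)) = x" if s: "s \<in> carrier G" for s
    proof -
      have "P (ga_mult G (ga_delta G (inv s)) x) = ga_mult G (ga_delta G (inv s)) x"
        by (rule Pfix, rule Ileft) (use s x delta_kG in auto)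
      then show ?thesis
        using s by (simp add: ga_assoc[symmetric] delta_delta one_left xk)
    qed
    then have "Q x = (\<lambda>u. c * (\<Sum>s\<in>carrier G. x u))" unfolding Q_def by simp
    also have "\<dots> = x" using N0 by (simp add: c_def N_def[symmetric] mult.assoc[symmetric])
    finally show ?thesis .
  qed
  have Qadd: "Q (\<lambda>u. x u + y u) = (\<lambda>u. Q x u + Q y u)" for x y
    unfolding Q_def by (simp add: mult_add_right Padd sum.distrib distrib_left)
  have Qscl: "Q (\<lambda>u. a * x u) = (\<lambda>u. a * Q x u)" for a x
    unfolding Q_def by (simp add: mult_scale_right Pscl sum_distrib_left mult.left_commute)
  have Q0: "Q (\<lambda>u. 0) = (\<lambda>u. 0)"
    using Qscl[of 0 "\<lambda>u. 0"] by simp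
  have Qsum: "finite A \<Longrightarrow> Q (\<lambda>u. \<Sum>r\<in>A. f r u) = (\<lambda>u. \<Sum>r\<in>A. Q (f r) u)" for A and f :: "'x \<Rightarrow> 'g \<Rightarrow> 'k"
  proof (induction A rule: finite_induct)
    case empty then show ?case using Q0 by simp
  next
    case (insert a A)
    then show ?case using Qadd[of "f a" "\<lambda>u. \<Sum>r\<in>A. f r u"] by simp
  qed
  have Qdelta: "Q (ga_mult G (ga_delta G r) x) = ga_mult G (ga_delta G r) (Q x)" if r: "r \<in> carrier G" for r x
  proof -
    have "(\<Sum>s\<in>carrier G. ga_mult G (ga_delta G s) (P (ga_mult G (ga_delta G (inv s)) (ga_mult G (ga_delta G r) x))) u)
      = (\<Sum>t\<in>carrier G. ga_mult G (ga_delta G (r \<otimes> t)) (P (ga_mult G (ga_delta G (inv (r \<otimes> t))) (ga_mult G (ga_delta G r) x))) u)" for u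
      using reindex_l[OF r, of "\<lambda>s. ga_mult G (ga_delta G s) (P (ga_mult G (ga_delta G (inv s)) (ga_mult G (ga_delta G r) x))) u"]
      by simp
    also have "\<dots>u = (\<Sum>t\<in>carrier G. ga_mult G (ga_delta G r) (ga_mult G (ga_delta G t) (P (ga_mult G (ga_delta G (inv t)) x))) u)" for u
    proof (rule sum.cong[OF refl])
      fix t assume t: "t \<in> carrier G"
      have h1: "ga_mult G (ga_delta G (inv (r \<otimes> t))) (ga_mult G (ga_delta G r) x) = ga_mult G (ga_delta G (inv t)) x"
        using r t by (simp add: ga_assoc[symmetric] delta_delta inv_mult_group m_assoc)
      have h2: "ga_delta G (r \<otimes> t) = ga_mult G (ga_delta G r) (ga_delta G t)"
        using r t by (simp add: delta_delta)
      show "ga_mult G (ga_delta G (r \<otimes> t)) (P (ga_mult G (ga_delta G (inv (r \<otimes> t))) (ga_mult G (ga_delta G r) x))) u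
         = ga_mult G (ga_delta G r) (ga_mult G (ga_delta G t) (P (ga_mult G (ga_delta G (inv t)) x))) u"
        unfolding h1 h2 ga_assoc by (rule refl)
    qed
    finally show ?thesis
      unfolding Q_def by (simp add: mult_scale_right mult_sum_right)
  qed
  have Qmult: "Q (ga_mult G y x) = ga_mult G y (Q x)" for y x
  proof -
    have "Q (ga_mult G y x) = Q (\<lambda>u. \<Sum>r\<in>carrier G. y r * ga_mult G (ga_delta G r) x u)"
      by (subst mult_as_sum) (rule refl)
    also have "\<dots> = (\<lambda>u. \<Sum>r\<in>carrier G. y r * Q (ga_mult G (ga_delta G r) x) u)"
      using Qsum[OF fin, of "\<lambda>r u. y r * ga_mult G (ga_delta G r) x u"] by (simp add: Qscl)
    also have "\<dots> = (\<lambda>u. \<Sum>r\<in>carrier G. y r * ga_mult G (ga_delta G r) (Q x) u)"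
      by (intro ext sum.cong refl) (simp add: Qdelta)
    also have "\<dots> = ga_mult G y (Q x)"
      by (subst (2) mult_as_sum) (rule refl)
    finally show ?thesis .
  qed
  show ?thesis
  proof (intro bexI ballI)
    show "Q (ga_delta G \<one>) \<in> I" by (rule QI)
    fix x assume x: "x \<in> I"
    then have "x = Q (ga_mult G x (ga_delta G \<one>))" using IkG by (auto simp: one_right Qfix)
    then show "ga_mult G x (Q (ga_delta G \<one>)) = x" by (simp add: Qmult)
  qed
qed

end

definition opG :: "('g,'b) monoid_scheme \<Rightarrow> ('g,'b) monoid_scheme" where
  "opG G = G\<lparr>mult := \<lambda>x y. y \<otimes>\<^bsub>G\<^esub> x\<rparr>"

lemma opG_carrier[simp]: "carrier (opG G) = carrier G"
  by (simp add: opG_def)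

lemma opG_one[simp]: "\<one>\<^bsub>opG G\<^esub> = \<one>\<^bsub>G\<^esub>"
  by (simp add: opG_def)

lemma opG_mult[simp]: "x \<otimes>\<^bsub>opG G\<^esub> y = y \<otimes>\<^bsub>G\<^esub> x"
  by (simp add: opG_def)

lemma opG_group:
  fixes G :: "('g,'b) monoid_scheme" (structure)
  shows "group G \<Longrightarrow> group (opG G)"
proof -
  assume "group G"
  then interpret group G .
  show ?thesis
  proof (rule groupI)
    show "\<And>x. x \<in> carrier (opG G) \<Longrightarrow> \<exists>y\<in>carrier (opG G). y \<otimes>\<^bsub>opG G\<^esub> x = \<one>\<^bsub>opG G\<^esub>"
      by (auto intro!: bexI[of _ "inv x" for x])
  qed (auto simp: m_assoc)
qed

lemma opG_inv: "group G \<Longrightarrow> x \<in> carrier G \<Longrightarrow> inv\<^bsub>opG G\<^esub> x = inv\<^bsub>G\<^esub> x"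
proof -
  assume g: "group G" and x: "x \<in> carrier G"
  interpret o: group "opG G" using opG_group[OF g] .
  interpret group G by (rule g)
  show ?thesis by (rule o.inv_equality) (use x in auto)
qed

lemma opG_kG: "kG (opG G) = kG G"
  by (simp add: kG_def)

lemma opG_ga_mult:
  fixes G :: "('g,'b) monoid_scheme" (structure)
  assumes g: "group G"
  shows "ga_mult (opG G) a b = ga_mult G b a"
proof (rule ext)
  interpret group G by (rule g)
  fix u
  show "ga_mult (opG G) a b u = ga_mult G b a u"
  proof (cases "u \<in> carrier G")
    case u: True
    have "(\<Sum>t\<in>carrier G. b t * a (inv t \<otimes> u)) = (\<Sum>s\<in>carrier G. a s * b (u \<otimes> inv s))"
    proof (rule sum.reindex_bij_witness[where j="\<lambda>t. inv t \<otimes> u" and i="\<lambda>s. u \<otimes> inv s"])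
      fix t assume t: "t \<in> carrier G"
      show "u \<otimes> inv (inv t \<otimes> u) = t" using t u by (simp add: inv_mult_group m_assoc[symmetric])
      show "inv t \<otimes> u \<in> carrier G" using t u by simp
      have "u \<otimes> inv (inv t \<otimes> u) = t" using t u by (simp add: inv_mult_group m_assoc[symmetric])
      then show "a (inv t \<otimes> u) * b (u \<otimes> inv (inv t \<otimes> u)) = b t * a (inv t \<otimes> u)"
        by simp
    next
      fix s assume s: "s \<in> carrier G"
      show "inv (u \<otimes> inv s) \<otimes> u = s" using s u by (simp add: inv_mult_group m_assoc)
      show "u \<otimes> inv s \<in> carrier G" using s u by simp
    qed
    then show ?thesis using u g by (simp add: ga_mult_def opG_inv)
  qed (simp add: ga_mult_def)
qed

lemma central_idem:
  fixes G :: "('g,'b) monoid_scheme" and I :: "('g \<Rightarrow> 'k::field_char_0) set"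
  assumes grp: "group G" and fin: "finite (carrier G)"
    and IkG: "I \<subseteq> kG G" and I0: "(\<lambda>u. 0) \<in> I"
    and Iadd: "\<And>x y. x \<in> I \<Longrightarrow> y \<in> I \<Longrightarrow> (\<lambda>u. x u + y u) \<in> I"
    and Iscl: "\<And>c x. x \<in> I \<Longrightarrow> (\<lambda>u. c * x u) \<in> I"
    and Ileft: "\<And>a x. a \<in> kG G \<Longrightarrow> x \<in> I \<Longrightarrow> ga_mult G a x \<in> I"
    and Iright: "\<And>a x. a \<in> kG G \<Longrightarrow> x \<in> I \<Longrightarrow> ga_mult G x a \<in> I"
  shows "\<exists>e\<in>I. e \<in> kG_center G \<and> ga_mult G e e = e \<and> (\<forall>x\<in>I. ga_mult G e x = x)"
proof -
  obtain e where eI: "e \<in> I" and e: "\<And>x. x \<in> I \<Longrightarrow> ga_mult G x e = x"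
    using left_unit_exists[OF grp fin IkG I0 Iadd Iscl Ileft] by blast
  have "\<exists>f\<in>I. \<forall>x\<in>I. ga_mult (opG G) x f = x"
    by (rule left_unit_exists[OF opG_group[OF grp]])
       (use fin IkG I0 Iadd Iscl Iright in \<open>auto simp: opG_kG opG_ga_mult[OF grp]\<close>)
  then obtain f where fI: "f \<in> I" and f: "\<And>x. x \<in> I \<Longrightarrow> ga_mult G f x = x"
    by (auto simp: opG_ga_mult[OF grp])
  have "e = f" using e[OF fI] f[OF eI] by simp
  have ek: "e \<in> kG G" using eI IkG by auto
  have "ga_mult G a e = ga_mult G e a" if a: "a \<in> kG G" for a
  proof -
    have "ga_mult G a e = ga_mult G e (ga_mult G a e)" using f[OF Ileft[OF a eI]] \<open>e = f\<close> by simp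
    also have "\<dots> = ga_mult G (ga_mult G e a) e" by (simp add: ga_assoc[OF grp fin])
    also have "\<dots> = ga_mult G e a" using e[OF Iright[OF a eI]] .
    finally show ?thesis .
  qed
  then have "e \<in> kG_center G" using ek by (auto simp: kG_center_def)
  moreover have "ga_mult G e e = e" using e[OF eI] .
  ultimately show ?thesis using eI f \<open>e = f\<close> by blast
qed


inductive_set kgen :: "('g,'b) monoid_scheme \<Rightarrow> ('g \<Rightarrow> 'k::field) set \<Rightarrow> ('g \<Rightarrow> 'k) set"
  for G S where
  kg_base: "x \<in> S \<Longrightarrow> x \<in> kgen G S"
| kg_zero: "(\<lambda>u. 0) \<in> kgen G S"
| kg_add: "x \<in> kgen G S \<Longrightarrow> y \<in> kgen G S \<Longrightarrow> (\<lambda>u. x u + y u) \<in> kgen G S"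
| kg_lm: "a \<in> kG G \<Longrightarrow> x \<in> kgen G S \<Longrightarrow> ga_mult G a x \<in> kgen G S"
| kg_rm: "a \<in> kG G \<Longrightarrow> x \<in> kgen G S \<Longrightarrow> ga_mult G x a \<in> kgen G S"

lemma kgen_kG: "S \<subseteq> kG G \<Longrightarrow> kgen G S \<subseteq> kG G"
proof
  fix x assume S: "S \<subseteq> kG G" and x: "x \<in> kgen G S"
  from x show "x \<in> kG G"
    by (induction rule: kgen.induct) (use S in \<open>auto simp: kG_def ga_mult_def\<close>)
qed

lemma kgen_scl:
  assumes grp: "group G" and fin: "finite (carrier G)" and S: "S \<subseteq> kG G"
    and x: "x \<in> kgen G S"
  shows "(\<lambda>u. c * x u) \<in> kgen G S"
proof -
  have xk: "x \<in> kG G" using kgen_kG[OF S] x by auto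
  have "(\<lambda>u. c * ga_delta G \<one>\<^bsub>G\<^esub> u) \<in> kG G"
    using group.is_monoid[OF grp] by (auto simp: kG_def ga_delta_def)
  then have "ga_mult G (\<lambda>u. c * ga_delta G \<one>\<^bsub>G\<^esub> u) x \<in> kgen G S"
    by (rule kg_lm[OF _ x])
  also have "ga_mult G (\<lambda>u. c * ga_delta G \<one>\<^bsub>G\<^esub> u) x = (\<lambda>u. c * x u)"
    by (simp add: mult_scale_left[OF grp fin] one_left[OF grp fin xk])
  finally show ?thesis .
qed

lemma twist0[simp]: "twist \<chi> 0 a = a"
  by (simp add: twist_def)

lemma H_mult_zpow:
  fixes G :: "('g,'b) monoid_scheme" and a b :: "'g \<Rightarrow> 'k::field"
  assumes ij: "i + j < n"
  shows "H_mult G \<chi> \<alpha> g n (zpow_times i a) (zpow_times j b) = zpow_times (i+j) (ga_mult G (twist \<chi> j a) b)"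
proof (intro ext)
  fix k u
  define F where "F i' j' = (if i' + j' = k then ga_mult G (twist \<chi> j' (zpow_times i a i')) (zpow_times j b j') u else 0)
     + (if i' + j' = k + n then ga_mult G (Hrel G \<alpha> g n) (ga_mult G (twist \<chi> j' (zpow_times i a i')) (zpow_times j b j')) u else 0)" for i' j'
  have Z1: "ga_mult G (twist \<chi> j' (\<lambda>u. 0)) y = (\<lambda>u. 0)" for j' y
    by (simp add: twist_def ga_mult_def fun_eq_iff)
  have Z2: "ga_mult G x (\<lambda>u. 0) = (\<lambda>u. 0)" for x :: "'g \<Rightarrow> 'k"
    by (simp add: ga_mult_def fun_eq_iff)
  have F0: "F i' j' = (if i' = i then if j' = j then F i j else 0 else 0)" for i' j'
    by (cases "i' = i"; cases "j' = j") (simp_all add: F_def zpow_times_def Z1 Z2)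
  have Fij: "F i j = (if i + j = k then ga_mult G (twist \<chi> j a) b u else 0)"
    using ij by (simp add: F_def zpow_times_def)
  have d1: "(\<Sum>j'<n. if j' = j then F i j else 0) = F i j" using ij by simp
  have "(\<Sum>i'<n. \<Sum>j'<n. F i' j') = (\<Sum>i'<n. if i' = i then F i j else 0)"
    by (rule sum.cong[OF refl]) (subst F0, use d1 in simp)
  also have "\<dots> = F i j" using ij by simp
  finally have "(\<Sum>i'<n. \<Sum>j'<n. F i' j') = F i j" .
  then have "H_mult G \<chi> \<alpha> g n (zpow_times i a) (zpow_times j b) k u
      = (if k < n \<and> u \<in> carrier G then F i j else 0)"
    by (simp add: H_mult_def F_def)
  also have "\<dots> = zpow_times (i+j) (ga_mult G (twist \<chi> j a) b) k u"
    using ij by (auto simp: Fij zpow_times_def ga_mult_def)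
  finally show "H_mult G \<chi> \<alpha> g n (zpow_times i a) (zpow_times j b) k u
      = zpow_times (i+j) (ga_mult G (twist \<chi> j a) b) k u" .
qed

lemma zpow_Hcarr: "m < n \<Longrightarrow> h \<in> kG G \<Longrightarrow> zpow_times m h \<in> Hcarr G n"
  by (auto simp: Hcarr_def zpow_times_def kG_def)

theorem lemma3p2:
  fixes G :: "('g, 'b) monoid_scheme" and \<chi> :: "'g \<Rightarrow> 'k::field_char_0"
    and g :: 'g and n :: nat and \<alpha> :: 'k
  assumes "alg_closed TYPE('k)"
    and "group G" and "finite (carrier G)"
    and "\<forall>s\<in>carrier G. \<chi> s \<noteq> 0"
    and "\<forall>s\<in>carrier G. \<forall>t\<in>carrier G. \<chi> (s \<otimes>\<^bsub>G\<^esub> t) = \<chi> s * \<chi> t"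
    and "g \<in> carrier G" and "\<forall>s\<in>carrier G. g \<otimes>\<^bsub>G\<^esub> s = s \<otimes>\<^bsub>G\<^esub> g"
    and "n = (LEAST k. 0 < k \<and> \<chi> g ^ k = 1)" and "2 \<le> n"
    and "Hrel G \<alpha> g n = (\<lambda>u. 0) \<or> (\<forall>s\<in>carrier G. \<chi> s ^ n = 1)"
    and "h1 \<in> kG G" and "h2 \<in> kG G" and "m \<le> n - 1"
  shows "\<exists>h\<in>kG_center G. ga_mult G h h = h \<and>
    Hideal_gen G \<chi> \<alpha> g n {zpow_times m h1, zpow_times m h2}
      = Hideal_gen G \<chi> \<alpha> g n {zpow_times m h}"
proof -
  note grp = assms(2) and fin = assms(3) and chi0 = assms(4)
  have mn: "m < n" using assms(9) assms(13) by simp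
  have n0: "0 < n" using assms(9) by simp
  define K where "K = kgen G {h1, h2}"
  have S: "{h1, h2} \<subseteq> kG G" using assms(11,12) by auto
  have "\<exists>e\<in>K. e \<in> kG_center G \<and> ga_mult G e e = e \<and> (\<forall>x\<in>K. ga_mult G e x = x)"
    unfolding K_def
  proof (rule central_idem[OF grp fin])
    show "kgen G {h1, h2} \<subseteq> kG G" by (rule kgen_kG[OF S])
    show "(\<lambda>u. 0) \<in> kgen G {h1, h2}" by (rule kg_zero)
    show "\<And>x y. x \<in> kgen G {h1, h2} \<Longrightarrow> y \<in> kgen G {h1, h2} \<Longrightarrow> (\<lambda>u. x u + y u) \<in> kgen G {h1, h2}"
      by (rule kg_add)
    show "\<And>c x. x \<in> kgen G {h1, h2} \<Longrightarrow> (\<lambda>u. c * x u) \<in> kgen G {h1, h2}"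
      by (rule kgen_scl[OF grp fin S])
    show "\<And>a x. a \<in> kG G \<Longrightarrow> x \<in> kgen G {h1, h2} \<Longrightarrow> ga_mult G a x \<in> kgen G {h1, h2}"
      by (rule kg_lm)
    show "\<And>a x. a \<in> kG G \<Longrightarrow> x \<in> kgen G {h1, h2} \<Longrightarrow> ga_mult G x a \<in> kgen G {h1, h2}"
      by (rule kg_rm)
  qed
  then obtain e where eK: "e \<in> K" and ec: "e \<in> kG_center G" and ee: "ga_mult G e e = e"
      and eu: "\<And>x. x \<in> K \<Longrightarrow> ga_mult G e x = x"
    by blast
  have ek: "e \<in> kG G" using ec by (simp add: kG_center_def)
  have P1: "zpow_times m e \<in> I"
    if id: "is_Hideal G \<chi> \<alpha> g n I" and A: "{zpow_times m h1, zpow_times m h2} \<subseteq> I" for I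
  proof -
    have mulL: "H_mult G \<chi> \<alpha> g n a x \<in> I" and mulR: "H_mult G \<chi> \<alpha> g n x a \<in> I"
      if "x \<in> I" "a \<in> Hcarr G n" for x a
      using id that unfolding is_Hideal_def by blast+
    have addI: "H_add x y \<in> I" if "x \<in> I" "y \<in> I" for x y
      using id that unfolding is_Hideal_def by blast
    have "x \<in> K \<Longrightarrow> zpow_times m x \<in> I" for x
      unfolding K_def
    proof (induction rule: kgen.induct)
      case (kg_base x) then show ?case using A by auto
    next
      case kg_zero
      show ?case using id by (simp add: zpow_times_def is_Hideal_def)
    next
      case (kg_add x y)
      have "H_add (zpow_times m x) (zpow_times m y) = zpow_times m (\<lambda>u. x u + y u)"
        by (auto simp: H_add_def zpow_times_def fun_eq_iff)
      then show ?case using addI[OF kg_add.IH] by simp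
    next
      case (kg_lm a x)
      define a' where "a' = (\<lambda>s. \<chi> s ^ m * a s)"
      have a'k: "a' \<in> kG G" using kg_lm.hyps(1) by (simp add: kG_def a'_def)
      have "twist \<chi> m a' = a"
      proof
        fix s show "twist \<chi> m a' s = a s"
        proof (cases "s \<in> carrier G")
          case True
          then have "\<chi> s \<noteq> 0" using chi0 by blast
          then have "inverse (\<chi> s) ^ m * \<chi> s ^ m = 1"
            by (simp add: power_mult_distrib[symmetric])
          then show ?thesis unfolding twist_def a'_def by (simp add: mult.assoc[symmetric])
        next
          case False
          then show ?thesis using kg_lm.hyps(1) by (simp add: twist_def a'_def kG_def)
        qed
      qed
      then have "H_mult G \<chi> \<alpha> g n (zpow_times 0 a') (zpow_times m x) = zpow_times m (ga_mult G a x)"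
        using H_mult_zpow[of 0 m n G \<chi> \<alpha> g a' x] mn by simp
      then show ?case using mulL[OF kg_lm.IH zpow_Hcarr[OF n0 a'k]] by simp
    next
      case (kg_rm a x)
      have "H_mult G \<chi> \<alpha> g n (zpow_times m x) (zpow_times 0 a) = zpow_times m (ga_mult G x a)"
        using H_mult_zpow[of m 0 n G \<chi> \<alpha> g x a] mn by simp
      then show ?case using mulR[OF kg_rm.IH zpow_Hcarr[OF n0 kg_rm.hyps(1)]] by simp
    qed
    then show ?thesis using eK by simp
  qed
  have P2: "{zpow_times m h1, zpow_times m h2} \<subseteq> I"
    if id: "is_Hideal G \<chi> \<alpha> g n I" and A: "zpow_times m e \<in> I" for I
  proof -
    have mulR: "H_mult G \<chi> \<alpha> g n x a \<in> I"
      if "x \<in> I" "a \<in> Hcarr G n" for x a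
      using id that unfolding is_Hideal_def by blast
    have "zpow_times m h \<in> I" if h: "h \<in> {h1, h2}" for h
    proof -
      have hK: "h \<in> K" using h unfolding K_def by (auto intro: kg_base)
      have hk: "h \<in> kG G" using h S by auto
      have "H_mult G \<chi> \<alpha> g n (zpow_times m e) (zpow_times 0 h) = zpow_times m h"
        using H_mult_zpow[of m 0 n G \<chi> \<alpha> g e h] mn eu[OF hK] by simp
      then show ?thesis using mulR[OF A zpow_Hcarr[OF n0 hk]] by simp
    qed
    then show ?thesis by blast
  qed
  have "{I. {zpow_times m h1, zpow_times m h2} \<subseteq> I \<and> is_Hideal G \<chi> \<alpha> g n I}
      = {I. {zpow_times m e} \<subseteq> I \<and> is_Hideal G \<chi> \<alpha> g n I}"
    using P1 P2 by auto
  then have "Hideal_gen G \<chi> \<alpha> g n {zpow_times m h1, zpow_times m h2}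
      = Hideal_gen G \<chi> \<alpha> g n {zpow_times m e}"
    unfolding Hideal_gen_def by (rule arg_cong[where f=Inter])
  then show ?thesis using ec ee by (intro bexI[of _ e]) auto
qed

end
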